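(* Let $\mathcal{Q}\subseteq\Delta_{N\times M}$ be a nonempty compact convex set. Then strong duality holds between the problem $$\text{(P)}\quad \max_{p,\lambda\in\mathbb{R}^N,\ V\in\mathbb{R}^{N\times M}} \ \sum_{n=1}^N \lambda_n - \delta^\ast(V\mid\mathcal{Q})\ \ \text{s.t.}\ \sum_{n=1}^N p_n \exp\!\left(\frac{\lambda_n - V_{nm}}{p_n}\right) \le 1\ \forall m,\ p\ge 0,\ \sum_n p_n=1,$$ and the problem $$\text{(D)}\quad \min_{v\in\mathbb{R}^M,\ Q\in\mathcal{Q}} \ \log\sum_{m=1}^M \exp(v_m) + \max_{n=1,\dots,N}\left\{\sum_{m=1}^M Q_{nm}\left(\log Q_{nm}-v_m\right)\right\},$$ i.e. the optimal values of (P) and (D) coincide. Consequently, the robust capacity $\sup_{p\in\Delta_N}\inf_{Q\in\mathcal{Q}}I(p,Q)$ equals the optimal value of (D).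
   Context: $\Delta_N$ is the probability simplex in $\mathbb{R}^N$; $\Delta_{N\times M}$ is the set of $N\times M$ nonnegative matrices with each row summing to $1$. $I(p,Q)=\sum_{n,m}p_nQ_{nm}\log\frac{Q_{nm}}{\sum_l p_lQ_{lm}}$ (terms with $p_nQ_{nm}=0$ are zero). $\delta^\ast(V\mid\mathcal{Q})=\sup_{Q\in\mathcal{Q}}\sum_{n,m}V_{nm}Q_{nm}$. Convention $0\log 0=0$. The term $p_n\exp((\lambda_n-V_{nm})/p_n)$ at $p_n=0$ equals $0$ if $\lambda_n\le V_{nm}$ and $+\infty$ otherwise. *)

theory Defs
  imports "HOL-Analysis.Analysis" "HOL-Library.Extended_Real"
begin

text \<open>Indices n range over the finite type 'n (size N), m over 'm (size M).
  Vectors in R^N are real^'n, N x M matrices are real^'m^'n with entry Q$n$m.\<close>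

definition prob_simplex :: "(real^'n) set" where
  "prob_simplex = {p. (\<forall>n. p$n \<ge> 0) \<and> (\<Sum>n\<in>UNIV. p$n) = 1}"

definition stoch_matrices :: "(real^'m^'n) set" where
  "stoch_matrices = {Q. (\<forall>n m. Q$n$m \<ge> 0) \<and> (\<forall>n. (\<Sum>m\<in>UNIV. Q$n$m) = 1)}"

definition mutual_info :: "real^'n \<Rightarrow> real^'m^'n \<Rightarrow> real" where
  "mutual_info p Q = (\<Sum>n\<in>UNIV. \<Sum>m\<in>UNIV.
     (if p$n * Q$n$m = 0 then 0
      else p$n * Q$n$m * ln (Q$n$m / (\<Sum>l\<in>UNIV. p$l * Q$l$m))))"

definition support_fun :: "real^'m^'n \<Rightarrow> (real^'m^'n) set \<Rightarrow> ereal" where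
  "support_fun V \<Q> = (SUP Q\<in>\<Q>. ereal (\<Sum>n\<in>UNIV. \<Sum>m\<in>UNIV. V$n$m * Q$n$m))"

definition persp_exp :: "real \<Rightarrow> real \<Rightarrow> real \<Rightarrow> ereal" where
  "persp_exp p lam v =
     (if p > 0 then ereal (p * exp ((lam - v) / p))
      else if lam \<le> v then 0 else \<infinity>)"

definition primal_feasible :: "real^'n \<Rightarrow> real^'n \<Rightarrow> real^'m^'n \<Rightarrow> bool" where
  "primal_feasible p lam V \<longleftrightarrow> p \<in> prob_simplex \<and>
     (\<forall>m. (\<Sum>n\<in>UNIV. persp_exp (p$n) (lam$n) (V$n$m)) \<le> 1)"

definition primal_value :: "(real^'m^'n) set \<Rightarrow> ereal" where
  "primal_value \<Q> = (SUP (p, lam, V) \<in> {(p, lam, V). primal_feasible p lam V}.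
      ereal (\<Sum>n\<in>UNIV. lam$n) - support_fun V \<Q>)"

definition xlogx :: "real \<Rightarrow> real" where
  "xlogx x = (if x = 0 then 0 else x * ln x)"

definition dual_obj :: "real^'m \<Rightarrow> real^'m^'n \<Rightarrow> real" where
  "dual_obj v Q = ln (\<Sum>m\<in>UNIV. exp (v$m)) +
     Max (range (\<lambda>n. \<Sum>m\<in>UNIV. xlogx (Q$n$m) - Q$n$m * v$m))"

definition dual_value :: "(real^'m^'n) set \<Rightarrow> ereal" where
  "dual_value \<Q> = (INF (v, Q) \<in> UNIV \<times> \<Q>. ereal (dual_obj v Q))"

definition robust_capacity :: "(real^'m^'n) set \<Rightarrow> ereal" where
  "robust_capacity \<Q> = (SUP p\<in>prob_simplex. INF Q\<in>\<Q>. ereal (mutual_info p Q))"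

end

theory Submission
  imports Defs
begin


lemma xlogx_eq: "xlogx x = x * ln x"
  by (simp add: xlogx_def)

lemma B2: assumes "(x::real) \<ge> 0" "z > 0" shows "x * ln z \<le> x * ln x + z - x"
proof (cases "x = 0")
  case True then show ?thesis using assms by simp
next
  case False
  then have xp: "x > 0" using assms by simp
  have "ln (z/x) \<le> z/x - 1" using ln_le_minus_one xp assms by simp
  then have "ln z - ln x \<le> z/x - 1" using ln_div xp assms by simp
  then have "x * (ln z - ln x) \<le> x * (z/x - 1)" using xp by (simp add: mult_left_mono)
  then show ?thesis using xp by (simp add: algebra_simps)
qed



definition rowent :: "real^'m^'n \<Rightarrow> 'n \<Rightarrow> real" where
  "rowent Q n = (\<Sum>m\<in>UNIV. xlogx (Q$n$m))"
definition outd :: "real^'n \<Rightarrow> real^'m^'n \<Rightarrow> 'm \<Rightarrow> real" where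
  "outd p Q m = (\<Sum>n\<in>UNIV. p$n * Q$n$m)"

lemma simplexD: "p \<in> prob_simplex \<Longrightarrow> p$n \<ge> 0" "p \<in> prob_simplex \<Longrightarrow> (\<Sum>n\<in>UNIV. p$n) = 1"
  by (auto simp: prob_simplex_def)
lemma stochD: "Q \<in> stoch_matrices \<Longrightarrow> Q$n$m \<ge> 0" "Q \<in> stoch_matrices \<Longrightarrow> (\<Sum>m\<in>UNIV. Q$n$m) = 1"
  by (auto simp: stoch_matrices_def)

lemma outd_ge: assumes "p \<in> prob_simplex" "Q \<in> stoch_matrices"
  shows "outd p Q m \<ge> p$n * Q$n$m"
  unfolding outd_def
  by (rule member_le_sum[where f="\<lambda>n. p$n * Q$n$m" and i=n]) (auto intro: mult_nonneg_nonneg simplexD stochD assms)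

lemma outd_nonneg: assumes "p \<in> prob_simplex" "Q \<in> stoch_matrices"
  shows "outd p Q m \<ge> 0"
  unfolding outd_def by (rule sum_nonneg) (auto intro: mult_nonneg_nonneg simplexD stochD assms)

lemma outd_sum: assumes "p \<in> prob_simplex" "Q \<in> stoch_matrices"
  shows "(\<Sum>m\<in>UNIV. outd p Q m) = 1"
proof -
  have "(\<Sum>m\<in>UNIV. outd p Q m) = (\<Sum>n\<in>UNIV. \<Sum>m\<in>UNIV. p$n * Q$n$m)"
    unfolding outd_def by (rule sum.swap)
  also have "\<dots> = (\<Sum>n\<in>UNIV. p$n)"
    by (simp add: sum_distrib_left[symmetric] stochD(2)[OF assms(2)])
  finally show ?thesis using simplexD(2)[OF assms(1)] by simp
qed

lemma mi_alt2: "mutual_info p Q = (\<Sum>n\<in>UNIV. \<Sum>m\<in>UNIV. p$n * Q$n$m * ln (Q$n$m / outd p Q m))"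
  unfolding mutual_info_def outd_def by (intro sum.cong refl) auto

lemma mi_alt: assumes p: "p \<in> prob_simplex" and Q: "Q \<in> stoch_matrices"
  shows "mutual_info p Q = (\<Sum>n\<in>UNIV. p$n * rowent Q n) - (\<Sum>m\<in>UNIV. xlogx (outd p Q m))"
proof -
  have trm: "p$n * Q$n$m * ln (Q$n$m / outd p Q m) = p$n * xlogx (Q$n$m) - p$n * Q$n$m * ln (outd p Q m)" for n m
  proof (cases "p$n * Q$n$m = 0")
    case True
    then show ?thesis by (auto simp: xlogx_def)
  next
    case False
    have "p$n \<ge> 0" "Q$n$m \<ge> 0" using simplexD stochD p Q by auto
    with False have pos: "p$n > 0" "Q$n$m > 0" by (auto simp: less_le)
    then have "outd p Q m > 0" using outd_ge[OF p Q, where m=m and n=n] by (smt (verit) mult_pos_pos)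
    then have e: "ln (Q$n$m / outd p Q m) = ln (Q$n$m) - ln (outd p Q m)" using pos by (simp add: ln_div)
    show ?thesis unfolding e by (simp add: xlogx_def algebra_simps)
  qed
  have "mutual_info p Q = (\<Sum>n\<in>UNIV. \<Sum>m\<in>UNIV. p$n * xlogx (Q$n$m) - p$n * Q$n$m * ln (outd p Q m))"
    unfolding mi_alt2 trm ..
  also have "\<dots> = (\<Sum>n\<in>UNIV. p$n * rowent Q n) - (\<Sum>n\<in>UNIV. \<Sum>m\<in>UNIV. p$n * Q$n$m * ln (outd p Q m))"
    by (simp add: sum_subtractf rowent_def sum_distrib_left)
  also have "(\<Sum>n\<in>UNIV. \<Sum>m\<in>UNIV. p$n * Q$n$m * ln (outd p Q m)) = (\<Sum>m\<in>UNIV. \<Sum>n\<in>UNIV. p$n * Q$n$m * ln (outd p Q m))"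
    by (rule sum.swap)
  also have "\<dots> = (\<Sum>m\<in>UNIV. xlogx (outd p Q m))"
    by (simp add: xlogx_eq outd_def sum_distrib_right)
  finally show ?thesis .
qed

lemma gibbs:
  fixes r q :: "'m::finite \<Rightarrow> real"
  assumes "\<And>m. r m \<ge> 0" "(\<Sum>m\<in>UNIV. r m) = 1" "\<And>m. q m > 0" "(\<Sum>m\<in>UNIV. q m) \<le> 1"
  shows "(\<Sum>m\<in>UNIV. r m * ln (q m)) \<le> (\<Sum>m\<in>UNIV. xlogx (r m))"
proof -
  have "(\<Sum>m\<in>UNIV. r m * ln (q m)) \<le> (\<Sum>m\<in>UNIV. r m * ln (r m) + q m - r m)"
    by (rule sum_mono) (use B2 assms in auto)
  also have "\<dots> = (\<Sum>m\<in>UNIV. xlogx (r m)) + (\<Sum>m\<in>UNIV. q m) - 1"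
    using assms(2) by (simp add: sum.distrib sum_subtractf xlogx_eq)
  finally show ?thesis using assms(4) by simp
qed



definition psi :: "real^'m^'n \<Rightarrow> real^'m \<Rightarrow> 'n \<Rightarrow> real" where
  "psi Q q n = (\<Sum>m\<in>UNIV. xlogx (Q$n$m) - Q$n$m * ln (q$m))"

definition sm :: "real^'m \<Rightarrow> real^'m" where
  "sm v = (\<chi> m. exp (v$m) / (\<Sum>l\<in>UNIV. exp (v$l)))"

lemma expsum_pos: "(\<Sum>l\<in>(UNIV::'m::finite set). exp ((v::'m \<Rightarrow> real) l)) > 0"
  by (simp add: sum_pos)

lemma sm_pos: "sm v $ m > 0"
  unfolding sm_def using expsum_pos[of "\<lambda>l. v$l"] by simp

lemma sm_sum: "(\<Sum>m\<in>UNIV. sm v $ m) = 1"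
  unfolding sm_def using expsum_pos[of "\<lambda>l. v$l"] by (simp add: sum_divide_distrib[symmetric])

lemma psi_sm: assumes Q: "Q \<in> stoch_matrices"
  shows "psi Q (sm v) n = ln (\<Sum>m\<in>UNIV. exp (v$m)) + (\<Sum>m\<in>UNIV. xlogx (Q$n$m) - Q$n$m * v$m)"
proof -
  let ?S = "\<Sum>m\<in>UNIV. exp (v$m)"
  have S: "?S > 0" using expsum_pos[of "\<lambda>l. v$l"] .
  have l: "ln (sm v $ m) = v$m - ln ?S" for m
    unfolding sm_def using S by (simp add: ln_div)
  have "psi Q (sm v) n = (\<Sum>m\<in>UNIV. xlogx (Q$n$m) - Q$n$m * v$m + Q$n$m * ln ?S)"
    unfolding psi_def by (intro sum.cong refl) (simp add: l algebra_simps)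
  also have "\<dots> = (\<Sum>m\<in>UNIV. xlogx (Q$n$m) - Q$n$m * v$m) + (\<Sum>m\<in>UNIV. Q$n$m) * ln ?S"
    by (simp add: sum.distrib sum_distrib_right)
  finally show ?thesis using stochD(2)[OF Q] by simp
qed

lemma psi_le_dual: assumes Q: "Q \<in> stoch_matrices"
  shows "psi Q (sm v) n \<le> dual_obj v Q"
  unfolding psi_sm[OF Q] dual_obj_def by (intro add_left_mono Max_ge) auto

lemma dual_eq_psi: assumes "(\<Sum>m\<in>UNIV. q$m) = 1" "\<And>m. q$m > 0"
  shows "dual_obj (\<chi> m. ln (q$m)) Q = Max (range (psi Q q))"
proof -
  have "(\<Sum>m\<in>UNIV. exp ((\<chi> m. ln (q$m)) $ m)) = (\<Sum>m\<in>UNIV. q$m)"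
    using assms(2) by simp
  then show ?thesis unfolding dual_obj_def psi_def using assms(1) by simp
qed

lemma psi_avg:
  "(\<Sum>n\<in>UNIV. p$n * psi Q q n) = (\<Sum>n\<in>UNIV. p$n * rowent Q n) - (\<Sum>m\<in>UNIV. outd p Q m * ln (q$m))"
proof -
  have "(\<Sum>n\<in>UNIV. p$n * psi Q q n) = (\<Sum>n\<in>UNIV. p$n * rowent Q n) - (\<Sum>n\<in>UNIV. \<Sum>m\<in>UNIV. p$n * Q$n$m * ln (q$m))"
    unfolding psi_def rowent_def by (simp add: sum_subtractf sum_distrib_left right_diff_distrib mult.assoc)
  also have "(\<Sum>n\<in>UNIV. \<Sum>m\<in>UNIV. p$n * Q$n$m * ln (q$m)) = (\<Sum>m\<in>UNIV. \<Sum>n\<in>UNIV. p$n * Q$n$m * ln (q$m))"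
    by (rule sum.swap)
  also have "\<dots> = (\<Sum>m\<in>UNIV. outd p Q m * ln (q$m))"
    by (simp add: outd_def sum_distrib_right)
  finally show ?thesis .
qed

lemma mi_le_psi: assumes p: "p \<in> prob_simplex" and Q: "Q \<in> stoch_matrices"
  and q: "\<And>m. q$m > 0" "(\<Sum>m\<in>UNIV. q$m) \<le> 1"
  shows "mutual_info p Q \<le> (\<Sum>n\<in>UNIV. p$n * psi Q q n)"
proof -
  have "(\<Sum>m\<in>UNIV. outd p Q m * ln (q$m)) \<le> (\<Sum>m\<in>UNIV. xlogx (outd p Q m))"
    by (rule gibbs[where r="outd p Q" and q="\<lambda>m. q$m"]) (use outd_nonneg outd_sum p Q q in auto)
  then show ?thesis using mi_alt[OF p Q] psi_avg[of p Q q] by linarith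
qed

lemma psi_nonneg: assumes Q: "Q \<in> stoch_matrices"
  and q: "\<And>m. q$m > 0" "(\<Sum>m\<in>UNIV. q$m) \<le> 1"
  shows "psi Q q n \<ge> 0"
proof -
  have "(\<Sum>m\<in>UNIV. Q$n$m * ln (q$m)) \<le> (\<Sum>m\<in>UNIV. xlogx (Q$n$m))"
    by (rule gibbs[where r="\<lambda>m. Q$n$m" and q="\<lambda>m. q$m"]) (use stochD Q q in auto)
  then show ?thesis unfolding psi_def by (simp add: sum_subtractf)
qed

lemma dual_nonneg: assumes Q: "Q \<in> stoch_matrices" shows "dual_obj v Q \<ge> 0"
  using psi_le_dual[OF Q, of v] psi_nonneg[OF Q, of "sm v"] sm_pos sm_sum
  by (metis order.refl order_trans)

lemma mi_le_dual: assumes p: "p \<in> prob_simplex" and Q: "Q \<in> stoch_matrices"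
  shows "mutual_info p Q \<le> dual_obj v Q"
proof -
  have "mutual_info p Q \<le> (\<Sum>n\<in>UNIV. p$n * psi Q (sm v) n)"
    by (rule mi_le_psi[OF p Q], rule sm_pos, simp add: sm_sum[of v])
  also have "\<dots> \<le> (\<Sum>n\<in>UNIV. p$n * dual_obj v Q)"
    by (rule sum_mono, rule mult_left_mono) (use psi_le_dual[OF Q] simplexD p in auto)
  also have "\<dots> = dual_obj v Q" using simplexD(2)[OF p] by (simp add: sum_distrib_right[symmetric])
  finally show ?thesis .
qed



lemma f_conv:
  fixes x1 x2 y1 y2 t :: real
  assumes "x1 \<ge> 0" "x2 \<ge> 0" "y1 > 0" "y2 > 0" "0 \<le> t" "t \<le> 1"
  shows "xlogx ((1-t)*x1 + t*x2) - ((1-t)*x1 + t*x2) * ln ((1-t)*y1 + t*y2)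
    \<le> (1-t) * (xlogx x1 - x1 * ln y1) + t * (xlogx x2 - x2 * ln y2)"
proof -
  define X where "X = (1-t)*x1 + t*x2"
  define Y where "Y = (1-t)*y1 + t*y2"
  have "(1-t)*y1 \<ge> (1-t)*min y1 y2" "t*y2 \<ge> t*min y1 y2"
    using assms by (auto intro!: mult_left_mono)
  moreover have "(1-t)*min y1 y2 + t*min y1 y2 = min y1 y2" by (simp add: algebra_simps)
  moreover have "min y1 y2 > 0" using assms by simp
  ultimately have Y: "Y > 0" unfolding Y_def by linarith
  have X0: "X \<ge> 0" unfolding X_def using assms by simp
  show ?thesis
  proof (cases "X = 0")
    case True
    then have "(1-t)*x1 = 0" "t*x2 = 0" unfolding X_def using assms
      by (smt (verit) mult_nonneg_nonneg)+
    then have e: "(1-t) * (xlogx x1 - x1 * ln y1) = 0" "t * (xlogx x2 - x2 * ln y2) = 0"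
      by (auto simp: xlogx_eq algebra_simps)
    have "xlogx ((1-t)*x1 + t*x2) - ((1-t)*x1 + t*x2) * ln ((1-t)*y1 + t*y2) = 0"
      using True unfolding X_def by (simp add: xlogx_def)
    then show ?thesis using e by linarith
  next
    case False
    then have Xp: "X > 0" using X0 by simp
    define k where "k = X / Y"
    have k: "k > 0" unfolding k_def using Xp Y by simp
    have key: "xlogx x - x * ln y \<ge> x * ln k + x - k * y" if "x \<ge> 0" "y > 0" for x y
    proof -
      have "x * ln (k*y) \<le> x * ln x + k*y - x" by (rule B2) (use that k in auto)
      moreover have "ln (k*y) = ln k + ln y" using k that by (simp add: ln_mult)
      ultimately show ?thesis by (simp add: xlogx_eq algebra_simps)
    qed
    have "(1-t) * (xlogx x1 - x1 * ln y1) + t * (xlogx x2 - x2 * ln y2)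
      \<ge> (1-t) * (x1 * ln k + x1 - k * y1) + t * (x2 * ln k + x2 - k * y2)"
      by (intro add_mono mult_left_mono key) (use assms in auto)
    moreover have "(1-t) * (x1 * ln k + x1 - k * y1) + t * (x2 * ln k + x2 - k * y2) = X * ln k + X - k * Y"
      unfolding X_def Y_def by (simp add: algebra_simps)
    moreover have "X - k * Y = 0" unfolding k_def using Y by simp
    moreover have "ln k = ln X - ln Y" unfolding k_def using Xp Y by (simp add: ln_div)
    ultimately show ?thesis unfolding X_def[symmetric] Y_def[symmetric]
      by (simp add: xlogx_eq algebra_simps)
  qed
qed

lemma psi_conv:
  assumes Q1: "Q1 \<in> stoch_matrices" and Q2: "Q2 \<in> stoch_matrices"
    and q1: "\<And>m. q1$m > 0" and q2: "\<And>m. q2$m > 0" and t: "0 \<le> t" "t \<le> 1"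
  shows "psi ((1-t) *\<^sub>R Q1 + t *\<^sub>R Q2) ((1-t) *\<^sub>R q1 + t *\<^sub>R q2) n \<le> (1-t) * psi Q1 q1 n + t * psi Q2 q2 n"
proof -
  have "psi ((1-t) *\<^sub>R Q1 + t *\<^sub>R Q2) ((1-t) *\<^sub>R q1 + t *\<^sub>R q2) n
     \<le> (\<Sum>m\<in>UNIV. (1-t) * (xlogx (Q1$n$m) - Q1$n$m * ln (q1$m)) + t * (xlogx (Q2$n$m) - Q2$n$m * ln (q2$m)))"
    unfolding psi_def by (rule sum_mono) (simp, rule f_conv, use stochD Q1 Q2 q1 q2 t in auto)
  also have "\<dots> = (1-t) * psi Q1 q1 n + t * psi Q2 q2 n"
    unfolding psi_def by (simp add: sum.distrib sum_distrib_left)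
  finally show ?thesis .
qed

lemma approx1:
  fixes p :: "real^'n" and Q :: "real^'m^'n"
  assumes p: "p \<in> prob_simplex" and Q: "Q \<in> stoch_matrices" and d: "d > 0"
  defines "qd \<equiv> (\<chi> m. (outd p Q m + d) / (1 + real CARD('m) * d))"
  shows "\<And>m. qd$m > 0" "(\<Sum>m\<in>UNIV. qd$m) = 1"
    "(\<Sum>n\<in>UNIV. p$n * psi Q qd n) \<le> mutual_info p Q + real CARD('m) * d"
proof -
  let ?M = "real CARD('m)"
  have den: "1 + ?M * d > 0" using d by (simp add: add_pos_nonneg)
  show pos: "qd$m > 0" for m unfolding qd_def using den d outd_nonneg[OF p Q, of m] by simp
  have "(\<Sum>m\<in>UNIV. qd$m) = (\<Sum>m\<in>UNIV. outd p Q m + d) / (1 + ?M * d)"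
    unfolding qd_def by (simp add: sum_divide_distrib)
  also have "(\<Sum>m\<in>UNIV. outd p Q m + d) = 1 + ?M * d"
    by (simp add: sum.distrib outd_sum[OF p Q])
  finally show "(\<Sum>m\<in>UNIV. qd$m) = 1" using den by simp
  have trm: "xlogx (outd p Q m) - outd p Q m * ln (qd$m) \<le> outd p Q m * ln (1 + ?M * d)" for m
  proof -
    let ?r = "outd p Q m"
    have r: "?r \<ge> 0" using outd_nonneg[OF p Q] .
    have e: "ln (qd$m) = ln (?r + d) - ln (1 + ?M * d)"
      unfolding qd_def using den d r by (simp add: ln_div)
    have "?r * ln ?r \<le> ?r * ln (?r + d)"
    proof (cases "?r = 0")
      case False then show ?thesis using r d by (intro mult_left_mono) auto
    qed simp
    then show ?thesis unfolding e by (simp add: xlogx_eq algebra_simps)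
  qed
  have "(\<Sum>m\<in>UNIV. xlogx (outd p Q m) - outd p Q m * ln (qd$m)) \<le> (\<Sum>m\<in>UNIV. outd p Q m * ln (1 + ?M * d))"
    by (rule sum_mono) (rule trm)
  also have "\<dots> = ln (1 + ?M * d)" by (simp add: sum_distrib_right[symmetric] outd_sum[OF p Q])
  also have "\<dots> \<le> ?M * d" using ln_add_one_self_le_self[of "?M * d"] d by simp
  finally have "(\<Sum>m\<in>UNIV. xlogx (outd p Q m)) - (\<Sum>m\<in>UNIV. outd p Q m * ln (qd$m)) \<le> ?M * d"
    by (simp add: sum_subtractf)
  then show "(\<Sum>n\<in>UNIV. p$n * psi Q qd n) \<le> mutual_info p Q + ?M * d"
    using psi_avg[of p Q qd] mi_alt[OF p Q] by linarith
qed



lemma S1: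
  fixes \<Q> :: "(real^'m^'n) set"
  assumes ne: "\<Q> \<noteq> {}" and cv: "convex \<Q>" and sub: "\<Q> \<subseteq> stoch_matrices"
    and c: "\<And>v Q. Q \<in> \<Q> \<Longrightarrow> c \<le> dual_obj v Q"
  shows "\<exists>p\<in>prob_simplex. \<forall>Q\<in>\<Q>. c \<le> mutual_info p Q"
proof -
  define K where "K = {u::real^'n. \<exists>Q\<in>\<Q>. \<exists>q::real^'m. (\<forall>m. q$m > 0) \<and> (\<Sum>m\<in>UNIV. q$m) = 1 \<and> (\<forall>n. psi Q q n < u$n)}"
  define z :: "real^'n" where "z = (\<chi> n. c)"
  have zK: "z \<notin> K"
  proof
    assume "z \<in> K"
    then obtain Q q where Q: "Q \<in> \<Q>" and q: "\<forall>m. q$m > 0" "(\<Sum>m\<in>UNIV. q$m) = 1" and lt: "\<forall>n. psi Q q n < c"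
      unfolding K_def z_def by auto
    have cm: "c \<le> Max (range (psi Q q))" using c[OF Q, of "\<chi> m. ln (q$m)"] dual_eq_psi[of q Q] q by simp
    have "Max (range (psi Q q)) \<in> range (psi Q q)" by (rule Max_in) auto
    then obtain n where "Max (range (psi Q q)) = psi Q q n" by blast
    then show False using lt cm by (metis not_le)
  qed
  have cK: "convex K"
    unfolding convex_alt
  proof (intro ballI allI impI, elim conjE)
    fix x y and u :: real
    assume "x \<in> K" "y \<in> K" "0 \<le> u" "u \<le> 1"
    then obtain Q1 q1 Q2 q2 where Q1: "Q1 \<in> \<Q>" and q1: "\<forall>m. q1$m > 0" "(\<Sum>m\<in>UNIV. q1$m) = 1" "\<forall>n. psi Q1 q1 n < x$n"
      and Q2: "Q2 \<in> \<Q>" and q2: "\<forall>m. q2$m > 0" "(\<Sum>m\<in>UNIV. q2$m) = 1" "\<forall>n. psi Q2 q2 n < y$n"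
      unfolding K_def by blast
    define Q where "Q = (1-u) *\<^sub>R Q1 + u *\<^sub>R Q2"
    define q where "q = (1-u) *\<^sub>R q1 + u *\<^sub>R q2"
    have "Q \<in> \<Q>" unfolding Q_def using cv Q1 Q2 \<open>0 \<le> u\<close> \<open>u \<le> 1\<close> by (simp add: convex_alt)
    moreover have "q$m > 0" for m
    proof -
      have "(1-u) * q1$m \<ge> 0" "u * q2$m \<ge> 0" using q1 q2 \<open>0 \<le> u\<close> \<open>u \<le> 1\<close>
        by (simp_all add: less_imp_le)
      moreover have "(1-u) * q1$m > 0 \<or> u * q2$m > 0" using q1 q2 \<open>0 \<le> u\<close> \<open>u \<le> 1\<close>
        by (cases "u = 1") auto
      ultimately show ?thesis unfolding q_def by auto
    qed
    moreover have "(\<Sum>m\<in>UNIV. q$m) = 1" unfolding q_def using q1 q2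
      by (simp add: sum.distrib sum_distrib_left[symmetric])
    moreover have "psi Q q n < ((1 - u) *\<^sub>R x + u *\<^sub>R y)$n" for n
    proof -
      have "psi Q q n \<le> (1-u) * psi Q1 q1 n + u * psi Q2 q2 n"
        unfolding Q_def q_def by (rule psi_conv) (use Q1 Q2 sub q1 q2 \<open>0 \<le> u\<close> \<open>u \<le> 1\<close> in auto)
      also have "\<dots> < (1-u) * x$n + u * y$n"
      proof (cases "u = 0")
        case True then show ?thesis using q1 by simp
      next
        case False
        then have "u * psi Q2 q2 n < u * y$n" using q2 \<open>0 \<le> u\<close> by simp
        moreover have "(1-u) * psi Q1 q1 n \<le> (1-u) * x$n"
          using q1 \<open>u \<le> 1\<close> by (intro mult_left_mono) (auto intro: less_imp_le)
        ultimately show ?thesis by simp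
      qed
      finally show ?thesis by simp
    qed
    ultimately show "(1 - u) *\<^sub>R x + u *\<^sub>R y \<in> K" unfolding K_def by blast
  qed
  obtain Q0 where Q0: "Q0 \<in> \<Q>" using ne by auto
  define q0 :: "real^'m" where "q0 = (\<chi> m. 1 / real CARD('m))"
  define u0 where "u0 = (\<chi> n. psi Q0 q0 n + 1)"
  have q0s: "(\<Sum>m\<in>UNIV. q0$m) = 1" unfolding q0_def by simp
  have q0p: "\<forall>m. q0$m > 0" unfolding q0_def by simp
  have "\<forall>n. psi Q0 q0 n < u0$n" unfolding u0_def by simp
  then have u0K: "u0 \<in> K" unfolding K_def using Q0 q0s q0p by blast
  have upK: "(\<chi> n. u$n + (if n = n0 then t else 0)) \<in> K" if uK: "u \<in> K" and t0: "t \<ge> 0" for u n0 t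
  proof -
    obtain Q q where Q: "Q \<in> \<Q>" "\<forall>m. q$m > 0" "(\<Sum>m\<in>UNIV. q$m) = 1" "\<forall>n. psi Q q n < u$n"
      using uK unfolding K_def by blast
    have "\<forall>n. psi Q q n < (\<chi> n. u$n + (if n = n0 then t else 0))$n"
    proof
      fix n show "psi Q q n < (\<chi> n. u$n + (if n = n0 then t else 0))$n"
        using Q(4) t0 by (smt (verit) vec_lambda_beta)
    qed
    then show ?thesis unfolding K_def using Q(1-3) by blast
  qed
  obtain a b where a: "a \<noteq> 0" and az: "a \<bullet> z \<le> b" and aK: "\<forall>x\<in>K. a \<bullet> x \<ge> b"
    using separating_hyperplane_sets[of "{z}" K] cK u0K zK by auto
  have inner_eq: "a \<bullet> x = (\<Sum>n\<in>UNIV. a$n * x$n)" for x :: "real^'n"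
    by (simp add: inner_vec_def)
  have anonneg: "a$n0 \<ge> 0" for n0
  proof (rule ccontr)
    assume "\<not> a$n0 \<ge> 0"
    then have neg: "a$n0 < 0" by simp
    define t where "t = (a \<bullet> u0 - b) / (- a$n0) + 1"
    have "a \<bullet> u0 - b \<ge> 0" using aK u0K by auto
    moreover have "- a$n0 > 0" using neg by simp
    ultimately have "(a \<bullet> u0 - b) / (- a$n0) \<ge> 0" by (rule divide_nonneg_pos)
    then have t0: "t \<ge> 0" unfolding t_def by linarith
    have "b \<le> a \<bullet> (\<chi> n. u0$n + (if n = n0 then t else 0))" using aK upK[OF u0K t0] by blast
    also have "\<dots> = a \<bullet> u0 + a$n0 * t"
    proof -
      have "a \<bullet> (\<chi> n. u0$n + (if n = n0 then t else 0)) = (\<Sum>n\<in>UNIV. a$n * u0$n + (if n = n0 then a$n * t else 0))"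
        unfolding inner_eq by (intro sum.cong refl) (auto simp: distrib_left)
      also have "\<dots> = a \<bullet> u0 + a$n0 * t" unfolding inner_eq by (simp add: sum.distrib)
      finally show ?thesis .
    qed
    also have "a$n0 * t = - (a \<bullet> u0 - b) + a$n0" unfolding t_def using neg by (simp add: field_simps)
    finally show False using neg by simp
  qed
  define s where "s = (\<Sum>n\<in>UNIV. a$n)"
  obtain n1 where "a$n1 \<noteq> 0" using a by (metis vec_eq_iff zero_index)
  then have "a$n1 > 0" using anonneg[of n1] by simp
  then have s: "s > 0" unfolding s_def by (intro sum_pos2[where i=n1]) (auto intro: anonneg)
  define p where "p = (\<chi> n. a$n / s)"
  have p: "p \<in> prob_simplex" unfolding prob_simplex_def p_def using s anonneg
    by (simp add: sum_divide_distrib[symmetric] s_def)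
  have main: "c \<le> (\<Sum>n\<in>UNIV. p$n * psi Q q n)" if Q: "Q \<in> \<Q>" and q: "\<forall>m. q$m > 0" "(\<Sum>m\<in>UNIV. q$m) = 1" for Q q
  proof (rule field_le_epsilon)
    fix e :: real assume e: "e > 0"
    have "\<forall>n. psi Q q n < (\<chi> n. psi Q q n + e)$n" using e by simp
    then have "(\<chi> n. psi Q q n + e) \<in> K" unfolding K_def using Q q by blast
    then have "b \<le> (\<Sum>n\<in>UNIV. a$n * (psi Q q n + e))" using aK inner_eq by auto
    moreover have "a \<bullet> z = c * s" unfolding inner_eq z_def s_def by (simp add: sum_distrib_left mult.commute)
    ultimately have "c * s \<le> (\<Sum>n\<in>UNIV. a$n * psi Q q n) + e * s"
      using az by (simp add: distrib_left sum.distrib s_def sum_distrib_left mult.commute)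
    then have "c \<le> (\<Sum>n\<in>UNIV. a$n * psi Q q n) / s + e" using s by (simp add: field_simps)
    also have "(\<Sum>n\<in>UNIV. a$n * psi Q q n) / s = (\<Sum>n\<in>UNIV. p$n * psi Q q n)"
      unfolding p_def by (simp add: sum_divide_distrib)
    finally show "c \<le> (\<Sum>n\<in>UNIV. p$n * psi Q q n) + e" .
  qed
  have "c \<le> mutual_info p Q" if Q: "Q \<in> \<Q>" for Q
  proof (rule field_le_epsilon)
    fix e :: real assume e: "e > 0"
    let ?M = "real CARD('m)"
    define d where "d = e / ?M"
    have d: "d > 0" unfolding d_def using e by simp
    have QS: "Q \<in> stoch_matrices" using Q sub by auto
    note A = approx1[OF p QS d]
    have "c \<le> (\<Sum>n\<in>UNIV. p$n * psi Q (\<chi> m. (outd p Q m + d) / (1 + ?M * d)) n)"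
      by (rule main[OF Q]) (use A(1,2) in auto)
    also have "\<dots> \<le> mutual_info p Q + ?M * d" by (rule A(3))
    finally show "c \<le> mutual_info p Q + e" unfolding d_def by simp
  qed
  then show ?thesis using p by blast
qed



definition Fset :: "real^'n \<Rightarrow> ((real^'n) \<times> (real^'m^'n)) set" where
  "Fset p = {(lam, V). (\<forall>n m. p$n = 0 \<longrightarrow> lam$n \<le> V$n$m) \<and>
     (\<forall>m. (\<Sum>n\<in>UNIV. if p$n > 0 then p$n * exp ((lam$n - V$n$m) / p$n) else 0) \<le> 1)}"

lemma sum_persp:
  assumes p: "p \<in> prob_simplex"
  shows "(\<Sum>n\<in>UNIV. persp_exp (p$n) (lam$n) (V$n$m)) =
    (if \<exists>n. p$n = 0 \<and> lam$n > V$n$m then \<infinity>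
     else ereal (\<Sum>n\<in>UNIV. if p$n > 0 then p$n * exp ((lam$n - V$n$m) / p$n) else 0))"
proof (cases "\<exists>n. p$n = 0 \<and> lam$n > V$n$m")
  case True
  then obtain n where "p$n = 0" "lam$n > V$n$m" by auto
  then have "persp_exp (p$n) (lam$n) (V$n$m) = \<infinity>" unfolding persp_exp_def by auto
  then have "(\<Sum>n\<in>UNIV. persp_exp (p$n) (lam$n) (V$n$m)) = \<infinity>"
    by (subst sum_Pinfty) auto
  then show ?thesis using True by simp
next
  case False
  have "persp_exp (p$n) (lam$n) (V$n$m) = ereal (if p$n > 0 then p$n * exp ((lam$n - V$n$m) / p$n) else 0)" for n
  proof -
    have "p$n \<ge> 0" using simplexD p by auto
    then show ?thesis using False unfolding persp_exp_def by (auto simp: not_less)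
  qed
  then show ?thesis using False by (simp add: sum_ereal)
qed

lemma feas_iff:
  assumes p: "p \<in> prob_simplex"
  shows "primal_feasible p lam V \<longleftrightarrow> (lam, V) \<in> Fset p"
proof -
  have "(\<Sum>n\<in>UNIV. persp_exp (p$n) (lam$n) (V$n$m)) \<le> 1 \<longleftrightarrow>
     (\<forall>n. p$n = 0 \<longrightarrow> lam$n \<le> V$n$m) \<and> (\<Sum>n\<in>UNIV. if p$n > 0 then p$n * exp ((lam$n - V$n$m) / p$n) else 0) \<le> 1" for m
    unfolding sum_persp[OF p] by (auto simp: not_less)
  then show ?thesis unfolding primal_feasible_def Fset_def using p by auto
qed

lemma inner_mat: "V \<bullet> Q = (\<Sum>n\<in>UNIV. \<Sum>m\<in>UNIV. V$n$m * Q$n$m)" for V Q :: "real^'m^'n"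
  by (simp add: inner_vec_def)

lemma W1:
  assumes p: "p \<in> prob_simplex" and F: "(lam, V) \<in> Fset p" and Q: "Q \<in> stoch_matrices"
  shows "(\<Sum>n\<in>UNIV. lam$n) - V \<bullet> Q \<le> mutual_info p Q"
proof -
  define g where "g n m = (if p$n > 0 then p$n * exp ((lam$n - V$n$m) / p$n) else 0)" for n m
  have F1: "\<And>n m. p$n = 0 \<Longrightarrow> lam$n \<le> V$n$m" and F2: "\<And>m. (\<Sum>n\<in>UNIV. g n m) \<le> 1"
    using F unfolding Fset_def g_def by auto
  let ?r = "outd p Q"
  have trm: "Q$n$m * (lam$n - V$n$m) \<le> p$n * Q$n$m * ln (Q$n$m / ?r m) + g n m * ?r m - p$n * Q$n$m" for n m
  proof -
    have pn: "p$n \<ge> 0" and qn: "Q$n$m \<ge> 0" using simplexD p stochD Q by auto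
    show ?thesis
    proof (cases "p$n = 0")
      case True
      then have "Q$n$m * (lam$n - V$n$m) \<le> 0" using F1 qn by (simp add: mult_nonneg_nonpos)
      then show ?thesis using True by (simp add: g_def)
    next
      case False
      then have pp: "p$n > 0" using pn by simp
      define t where "t = (lam$n - V$n$m) / p$n"
      have lv: "lam$n - V$n$m = p$n * t" unfolding t_def using pp by simp
      have gv: "g n m = p$n * exp t" unfolding g_def t_def using pp by simp
      have rn: "?r m \<ge> 0" using outd_nonneg[OF p Q] .
      show ?thesis
      proof (cases "Q$n$m = 0")
        case True
        then show ?thesis using gv pp rn by simp
      next
        case False
        then have qp: "Q$n$m > 0" using qn by simp
        have rp: "?r m > 0" using outd_ge[OF p Q, where m=m and n=n] pp qp
          by (smt (verit) mult_pos_pos)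
        have "ln (exp t * ?r m / Q$n$m) \<le> exp t * ?r m / Q$n$m - 1"
          by (rule ln_le_minus_one) (use rp qp in simp)
        moreover have "ln (exp t * ?r m / Q$n$m) = t + ln (?r m) - ln (Q$n$m)"
          using rp qp by (simp add: ln_div ln_mult)
        ultimately have "t + ln (?r m) - ln (Q$n$m) \<le> exp t * ?r m / Q$n$m - 1" by simp
        then have "Q$n$m * (t + ln (?r m) - ln (Q$n$m)) \<le> Q$n$m * (exp t * ?r m / Q$n$m - 1)"
          using qp by (intro mult_left_mono) auto
        then have "Q$n$m * t \<le> Q$n$m * (ln (Q$n$m) - ln (?r m)) + exp t * ?r m - Q$n$m"
          using qp by (simp add: algebra_simps)
        then have ineq: "p$n * (Q$n$m * t) \<le> p$n * (Q$n$m * (ln (Q$n$m) - ln (?r m)) + exp t * ?r m - Q$n$m)"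
          using pp by (intro mult_left_mono) auto
        have e: "ln (Q$n$m / ?r m) = ln (Q$n$m) - ln (?r m)" using qp rp by (simp add: ln_div)
        show ?thesis unfolding lv gv e using ineq by (simp add: algebra_simps)
      qed
    qed
  qed
  have lhs: "(\<Sum>n\<in>UNIV. lam$n) - V \<bullet> Q = (\<Sum>n\<in>UNIV. \<Sum>m\<in>UNIV. Q$n$m * (lam$n - V$n$m))"
  proof -
    have "(\<Sum>n\<in>UNIV. \<Sum>m\<in>UNIV. Q$n$m * (lam$n - V$n$m)) = (\<Sum>n\<in>UNIV. lam$n * (\<Sum>m\<in>UNIV. Q$n$m) - (\<Sum>m\<in>UNIV. V$n$m * Q$n$m))"
      by (simp add: algebra_simps sum_subtractf sum_distrib_left)
    also have "\<dots> = (\<Sum>n\<in>UNIV. lam$n) - V \<bullet> Q"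
      using stochD(2)[OF Q] by (simp add: inner_mat sum_subtractf)
    finally show ?thesis by simp
  qed
  have "(\<Sum>n\<in>UNIV. \<Sum>m\<in>UNIV. Q$n$m * (lam$n - V$n$m)) \<le>
     (\<Sum>n\<in>UNIV. \<Sum>m\<in>UNIV. p$n * Q$n$m * ln (Q$n$m / ?r m) + g n m * ?r m - p$n * Q$n$m)"
    by (intro sum_mono trm)
  also have "\<dots> = mutual_info p Q + (\<Sum>n\<in>UNIV. \<Sum>m\<in>UNIV. g n m * ?r m) - (\<Sum>n\<in>UNIV. \<Sum>m\<in>UNIV. p$n * Q$n$m)"
    unfolding mi_alt2 by (simp add: sum.distrib sum_subtractf)
  also have "(\<Sum>n\<in>UNIV. \<Sum>m\<in>UNIV. p$n * Q$n$m) = 1"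
    using stochD(2)[OF Q] simplexD(2)[OF p] by (simp add: mult.assoc sum_distrib_left[symmetric])
  also have "(\<Sum>n\<in>UNIV. \<Sum>m\<in>UNIV. g n m * ?r m) = (\<Sum>m\<in>UNIV. (\<Sum>n\<in>UNIV. g n m) * ?r m)"
    by (subst sum.swap) (simp add: sum_distrib_right)
  also have "\<dots> \<le> (\<Sum>m\<in>UNIV. 1 * ?r m)"
    by (intro sum_mono mult_right_mono F2 outd_nonneg[OF p Q])
  also have "\<dots> = 1" using outd_sum[OF p Q] by simp
  finally show ?thesis using lhs by simp
qed

lemma approx2:
  fixes p :: "real^'n" and Q :: "real^'m^'n"
  assumes p: "p \<in> prob_simplex" and Q: "Q \<in> stoch_matrices" and d: "d > 0"
  shows "\<exists>lam V. (lam, V) \<in> Fset p \<and> mutual_info p Q - real CARD('m) * d \<le> (\<Sum>n\<in>UNIV. lam$n) - V \<bullet> Q"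
proof -
  let ?r = "outd p Q"
  define V :: "real^'m^'n" where "V = (\<chi> n m. - p$n * ln ((Q$n$m + d) / (?r m + d)))"
  have pn: "\<And>n. p$n \<ge> 0" and qn: "\<And>n m. Q$n$m \<ge> 0" and rn: "\<And>m. ?r m \<ge> 0"
    using simplexD p stochD Q outd_nonneg[OF p Q] by auto
  have fr: "(Q$n$m + d) / (?r m + d) > 0" for n m using qn[of n m] rn[of m] d by simp
  have c1: "\<forall>n m. p$n = 0 \<longrightarrow> (0::real^'n)$n \<le> V$n$m" unfolding V_def by simp
  have c2: "(\<Sum>n\<in>UNIV. if p$n > 0 then p$n * exp (((0::real^'n)$n - V$n$m) / p$n) else 0) \<le> 1" for m
  proof -
    have "(\<Sum>n\<in>UNIV. if p$n > 0 then p$n * exp (((0::real^'n)$n - V$n$m) / p$n) else 0) = (\<Sum>n\<in>UNIV. p$n * (Q$n$m + d) / (?r m + d))"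
    proof (rule sum.cong[OF refl])
      fix n
      show "(if p$n > 0 then p$n * exp (((0::real^'n)$n - V$n$m) / p$n) else 0) = p$n * (Q$n$m + d) / (?r m + d)"
      proof (cases "p$n > 0")
        case True
        then have "((0::real^'n)$n - V$n$m) / p$n = ln ((Q$n$m + d) / (?r m + d))" unfolding V_def by simp
        then show ?thesis using True fr[of n m] by simp
      next
        case False then show ?thesis using pn[of n] by simp
      qed
    qed
    also have "\<dots> = (\<Sum>n\<in>UNIV. p$n * Q$n$m + p$n * d) / (?r m + d)"
      by (simp add: sum_divide_distrib algebra_simps)
    also have "\<dots> = 1" using simplexD(2)[OF p] rn[of m] d
      by (simp add: sum.distrib outd_def sum_distrib_right[symmetric])
    finally show ?thesis by simp
  qed
  have "(0::real^'n, V) \<in> Fset p" unfolding Fset_def using c1 c2 by blast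
  moreover have "mutual_info p Q - real CARD('m) * d \<le> (\<Sum>n\<in>UNIV. (0::real^'n)$n) - V \<bullet> Q"
  proof -
    have trm: "p$n * Q$n$m * ln (Q$n$m / ?r m) - p$n * Q$n$m * d / ?r m \<le> - V$n$m * Q$n$m" for n m
    proof (cases "p$n * Q$n$m = 0")
      case True then show ?thesis unfolding V_def by auto
    next
      case False
      then have pp: "p$n > 0" and qp: "Q$n$m > 0" using pn[of n] qn[of n m] by (auto simp: less_le)
      have rp: "?r m > 0" using outd_ge[OF p Q, where m=m and n=n] pp qp by (smt (verit) mult_pos_pos)
      have "ln ((?r m + d) / ?r m) \<le> (?r m + d) / ?r m - 1" by (rule ln_le_minus_one) (use rp d in simp)
      then have a: "ln (?r m + d) - ln (?r m) \<le> d / ?r m" using rp d by (simp add: ln_div field_simps)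
      have b: "ln (Q$n$m) \<le> ln (Q$n$m + d)" using qp d by simp
      have "ln (Q$n$m / ?r m) - d / ?r m \<le> ln ((Q$n$m + d) / (?r m + d))"
      proof -
        have e1: "ln (Q$n$m / ?r m) = ln (Q$n$m) - ln (?r m)" using qp rp by (simp add: ln_div)
        have e2: "ln ((Q$n$m + d) / (?r m + d)) = ln (Q$n$m + d) - ln (?r m + d)" using qp rp d by (simp add: ln_div)
        show ?thesis unfolding e1 e2 using a b by linarith
      qed
      then have "p$n * Q$n$m * (ln (Q$n$m / ?r m) - d / ?r m) \<le> p$n * Q$n$m * ln ((Q$n$m + d) / (?r m + d))"
        using pp qp by (intro mult_left_mono) auto
      then show ?thesis unfolding V_def by (simp add: algebra_simps)
    qed
    have "mutual_info p Q - (\<Sum>n\<in>UNIV. \<Sum>m\<in>UNIV. p$n * Q$n$m * d / ?r m) \<le> (\<Sum>n\<in>UNIV. \<Sum>m\<in>UNIV. - V$n$m * Q$n$m)"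
      unfolding mi_alt2 sum_subtractf[symmetric] by (intro sum_mono trm)
    moreover have "(\<Sum>n\<in>UNIV. \<Sum>m\<in>UNIV. p$n * Q$n$m * d / ?r m) \<le> real CARD('m) * d"
    proof -
      have "(\<Sum>n\<in>UNIV. \<Sum>m\<in>UNIV. p$n * Q$n$m * d / ?r m) = (\<Sum>m\<in>UNIV. ?r m * (d / ?r m))"
        by (subst sum.swap) (simp add: outd_def sum_distrib_right sum_divide_distrib)
      also have "\<dots> \<le> (\<Sum>m\<in>(UNIV::'m set). d)"
      proof (rule sum_mono)
        fix m show "?r m * (d / ?r m) \<le> d" using d rn[of m] by (cases "?r m = 0") auto
      qed
      also have "\<dots> = real CARD('m) * d" by simp
      finally show ?thesis .
    qed
    moreover have "(\<Sum>n\<in>UNIV. \<Sum>m\<in>UNIV. - V$n$m * Q$n$m) = - (V \<bullet> Q)"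
      by (simp add: inner_mat sum_negf)
    ultimately show ?thesis by simp
  qed
  ultimately show ?thesis by blast
qed



definition dsup :: "(real^'m^'n) set \<Rightarrow> real^'m^'n \<Rightarrow> real" where
  "dsup \<Q> V = Sup ((\<lambda>Q. V \<bullet> Q) ` \<Q>)"

lemma inner_bound:
  fixes \<Q> :: "(real^'m^'n) set"
  assumes "compact \<Q>"
  obtains B where "\<And>Q. Q \<in> \<Q> \<Longrightarrow> \<bar>V \<bullet> Q\<bar> \<le> B"
proof -
  obtain C where C: "\<And>Q. Q \<in> \<Q> \<Longrightarrow> norm Q \<le> C"
    using compact_imp_bounded[OF assms] unfolding bounded_iff by blast
  have "\<bar>V \<bullet> Q\<bar> \<le> norm V * C" if "Q \<in> \<Q>" for Q
    using Cauchy_Schwarz_ineq2[of V Q] C[OF that] by (smt (verit) mult_left_mono norm_ge_zero)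
  then show ?thesis using that by blast
qed

lemma dsup_ge:
  assumes "compact \<Q>" "Q \<in> \<Q>" shows "V \<bullet> Q \<le> dsup \<Q> V"
proof -
  obtain B where B: "\<And>Q. Q \<in> \<Q> \<Longrightarrow> \<bar>V \<bullet> Q\<bar> \<le> B" using inner_bound[OF assms(1)] by blast
  have "bdd_above ((\<lambda>Q. V \<bullet> Q) ` \<Q>)" using B by (intro bdd_aboveI2[where M=B]) (smt (verit))
  then show ?thesis unfolding dsup_def by (rule cSUP_upper[OF assms(2)])
qed

lemma dsup_le:
  assumes "\<Q> \<noteq> {}" "\<And>Q. Q \<in> \<Q> \<Longrightarrow> V \<bullet> Q \<le> c" shows "dsup \<Q> V \<le> c"
  unfolding dsup_def using assms by (intro cSUP_least) auto

lemma support_eq: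
  assumes "compact \<Q>" "\<Q> \<noteq> {}"
  shows "support_fun V \<Q> = ereal (dsup \<Q> V)"
proof -
  obtain B where B: "\<And>Q. Q \<in> \<Q> \<Longrightarrow> \<bar>V \<bullet> Q\<bar> \<le> B" using inner_bound[OF assms(1)] by blast
  have "support_fun V \<Q> = (SUP Q\<in>\<Q>. ereal (V \<bullet> Q))" unfolding support_fun_def inner_mat ..
  also have "\<dots> = ereal (dsup \<Q> V)" unfolding dsup_def
  proof (rule ereal_SUP[symmetric])
    show "\<bar>SUP Q\<in>\<Q>. ereal (V \<bullet> Q)\<bar> \<noteq> \<infinity>"
      by (rule ereal_SUP_not_infty[where l="ereal (-B)" and u="ereal B"]) (use assms(2) B in \<open>force simp: abs_le_iff\<close>)+
  qed
  finally show ?thesis .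
qed

lemma dsup_zero: "\<Q> \<noteq> {} \<Longrightarrow> dsup \<Q> 0 = 0"
  unfolding dsup_def by simp

lemma Fset_zero: fixes p :: "real^'n" assumes p: "p \<in> prob_simplex" shows "(0, (0::real^'m^'n)) \<in> Fset p"
proof -
  have "(\<Sum>n\<in>UNIV. if p$n > 0 then p$n * exp (((0::real^'n)$n - (0::real^'m^'n)$n$m) / p$n) else 0) = (\<Sum>n\<in>UNIV. p$n)" for m
    by (rule sum.cong) (use simplexD(1)[OF p] in \<open>auto simp: less_le\<close>)
  then show ?thesis unfolding Fset_def using simplexD(2)[OF p] by auto
qed

lemma Fset_convex:
  fixes p l1 l2 :: "real^'n" and V1 V2 :: "real^'m^'n"
  assumes F1: "(l1, V1) \<in> Fset p" and F2: "(l2, V2) \<in> Fset p" and u: "0 \<le> u" "u \<le> 1"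
  shows "((1-u) *\<^sub>R l1 + u *\<^sub>R l2, (1-u) *\<^sub>R V1 + u *\<^sub>R V2) \<in> Fset p"
proof -
  let ?l = "(1-u) *\<^sub>R l1 + u *\<^sub>R l2" and ?V = "(1-u) *\<^sub>R V1 + u *\<^sub>R V2"
  define g where "g l V n m = (if p$n > 0 then p$n * exp ((l$n - V$n$m) / p$n) else 0)" for l :: "real^'n" and V :: "real^'m^'n" and n :: 'n and m :: 'm
  have A1: "\<And>n m. p$n = 0 \<Longrightarrow> l1$n \<le> V1$n$m" "\<And>m. (\<Sum>n\<in>UNIV. g l1 V1 n m) \<le> 1"
    using F1 unfolding Fset_def g_def by auto
  have A2: "\<And>n m. p$n = 0 \<Longrightarrow> l2$n \<le> V2$n$m" "\<And>m. (\<Sum>n\<in>UNIV. g l2 V2 n m) \<le> 1"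
    using F2 unfolding Fset_def g_def by auto
  have c1: "?l$n \<le> ?V$n$m" if "p$n = 0" for n m
  proof -
    have "(1-u) * l1$n \<le> (1-u) * V1$n$m" "u * l2$n \<le> u * V2$n$m"
      using A1(1)[OF that] A2(1)[OF that] u by (auto intro: mult_left_mono)
    then show ?thesis by simp
  qed
  have gc: "g ?l ?V n m \<le> (1-u) * g l1 V1 n m + u * g l2 V2 n m" for n m
  proof (cases "p$n > 0")
    case True
    have "(?l$n - ?V$n$m) / p$n = (1-u) * ((l1$n - V1$n$m) / p$n) + u * ((l2$n - V2$n$m) / p$n)"
      using True by (simp add: field_simps)
    then have "exp ((?l$n - ?V$n$m) / p$n) \<le> (1-u) * exp ((l1$n - V1$n$m) / p$n) + u * exp ((l2$n - V2$n$m) / p$n)"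
      using convex_onD[OF exp_convex, of u "(l1$n - V1$n$m) / p$n" "(l2$n - V2$n$m) / p$n"] u by simp
    then have "p$n * exp ((?l$n - ?V$n$m) / p$n) \<le> p$n * ((1-u) * exp ((l1$n - V1$n$m) / p$n) + u * exp ((l2$n - V2$n$m) / p$n))"
      using True by (intro mult_left_mono) auto
    then show ?thesis using True unfolding g_def by (simp add: algebra_simps)
  next
    case False then show ?thesis unfolding g_def by simp
  qed
  have c2: "(\<Sum>n\<in>UNIV. g ?l ?V n m) \<le> 1" for m
  proof -
    have "(\<Sum>n\<in>UNIV. g ?l ?V n m) \<le> (\<Sum>n\<in>UNIV. (1-u) * g l1 V1 n m + u * g l2 V2 n m)"
      by (intro sum_mono gc)
    also have "\<dots> = (1-u) * (\<Sum>n\<in>UNIV. g l1 V1 n m) + u * (\<Sum>n\<in>UNIV. g l2 V2 n m)"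
      by (simp add: sum.distrib sum_distrib_left)
    also have "\<dots> \<le> (1-u) * 1 + u * 1"
      using A1(2)[of m] A2(2)[of m] u by (intro add_mono mult_left_mono) auto
    finally show ?thesis by simp
  qed
  show ?thesis unfolding Fset_def using c1 c2 unfolding g_def by auto
qed



lemma S2:
  fixes \<Q> :: "(real^'m^'n) set" and p :: "real^'n"
  assumes ne: "\<Q> \<noteq> {}" and cp: "compact \<Q>" and cv: "convex \<Q>"
    and c: "\<And>lam V. (lam, V) \<in> Fset p \<Longrightarrow> (\<Sum>n\<in>UNIV. lam$n) - dsup \<Q> V \<le> c"
    and p: "p \<in> prob_simplex"
  shows "\<exists>Q0\<in>\<Q>. \<forall>lam V. (lam, V) \<in> Fset p \<longrightarrow> (\<Sum>n\<in>UNIV. lam$n) - V \<bullet> Q0 \<le> c"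
proof -
  define T :: "((real^'m^'n) \<times> real) set" where
    "T = {(V, s). \<exists>lam. (lam, V) \<in> Fset p \<and> s \<le> (\<Sum>n\<in>UNIV. lam$n) - c}"
  define U :: "((real^'m^'n) \<times> real) set" where
    "U = {(V, s). s > dsup \<Q> V}"
  have dsup_conv: "dsup \<Q> ((1-u) *\<^sub>R V1 + u *\<^sub>R V2) \<le> (1-u) * dsup \<Q> V1 + u * dsup \<Q> V2"
    if "0 \<le> u" "u \<le> 1" for u V1 V2
  proof (rule dsup_le[OF ne])
    fix Q assume Q: "Q \<in> \<Q>"
    have "(1-u) * (V1 \<bullet> Q) \<le> (1-u) * dsup \<Q> V1" "u * (V2 \<bullet> Q) \<le> u * dsup \<Q> V2"
      using dsup_ge[OF cp Q] that by (auto intro: mult_left_mono)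
    then show "((1-u) *\<^sub>R V1 + u *\<^sub>R V2) \<bullet> Q \<le> (1-u) * dsup \<Q> V1 + u * dsup \<Q> V2"
      by (simp add: inner_add_left)
  qed
  have cT: "convex T" unfolding convex_alt
  proof (intro ballI allI impI, elim conjE)
    fix x y and u :: real assume x: "x \<in> T" and y: "y \<in> T" and u: "0 \<le> u" "u \<le> 1"
    obtain V1 s1 l1 where x': "x = (V1, s1)" "(l1, V1) \<in> Fset p" "s1 \<le> (\<Sum>n\<in>UNIV. l1$n) - c"
      using x unfolding T_def by auto
    obtain V2 s2 l2 where y': "y = (V2, s2)" "(l2, V2) \<in> Fset p" "s2 \<le> (\<Sum>n\<in>UNIV. l2$n) - c"
      using y unfolding T_def by auto
    have F: "((1-u) *\<^sub>R l1 + u *\<^sub>R l2, (1-u) *\<^sub>R V1 + u *\<^sub>R V2) \<in> Fset p"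
      by (rule Fset_convex[OF x'(2) y'(2) u])
    have "(1-u) * s1 \<le> (1-u) * ((\<Sum>n\<in>UNIV. l1$n) - c)" "u * s2 \<le> u * ((\<Sum>n\<in>UNIV. l2$n) - c)"
      using x'(3) y'(3) u by (auto intro: mult_left_mono)
    moreover have es: "(\<Sum>n\<in>UNIV. ((1-u) *\<^sub>R l1 + u *\<^sub>R l2)$n) = (1-u) * (\<Sum>n\<in>UNIV. l1$n) + u * (\<Sum>n\<in>UNIV. l2$n)"
      by (simp add: sum.distrib sum_distrib_left)
    ultimately have "(1-u) * s1 + u * s2 \<le> (\<Sum>n\<in>UNIV. ((1-u) *\<^sub>R l1 + u *\<^sub>R l2)$n) - c"
      by (simp add: algebra_simps)
    then show "(1 - u) *\<^sub>R x + u *\<^sub>R y \<in> T" unfolding T_def x'(1) y'(1) using F by auto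
  qed
  have cU: "convex U" unfolding convex_alt
  proof (intro ballI allI impI, elim conjE)
    fix x y and u :: real assume x: "x \<in> U" and y: "y \<in> U" and u: "0 \<le> u" "u \<le> 1"
    obtain V1 s1 where x': "x = (V1, s1)" "s1 > dsup \<Q> V1" using x unfolding U_def by auto
    obtain V2 s2 where y': "y = (V2, s2)" "s2 > dsup \<Q> V2" using y unfolding U_def by auto
    have "(1-u) * dsup \<Q> V1 + u * dsup \<Q> V2 < (1-u) * s1 + u * s2"
    proof (cases "u = 0")
      case True then show ?thesis using x' by simp
    next
      case False
      then have "u * dsup \<Q> V2 < u * s2" using y' u by simp
      moreover have "(1-u) * dsup \<Q> V1 \<le> (1-u) * s1" using x' u by (intro mult_left_mono) auto
      ultimately show ?thesis by simp
    qed
    then show "(1 - u) *\<^sub>R x + u *\<^sub>R y \<in> U" unfolding U_def x'(1) y'(1)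
      using dsup_conv[OF u, of V1 V2] by auto
  qed
  have T0: "(0, - c) \<in> T" unfolding T_def using Fset_zero[OF p] by auto
  have U0: "(0, t) \<in> U" if "t > 0" for t unfolding U_def using dsup_zero[OF ne] that by simp
  have UV: "(V, dsup \<Q> V + e) \<in> U" if "e > 0" for V e unfolding U_def using that by simp
  have nU: "x \<notin> U" if xT: "x \<in> T" for x
  proof -
    obtain V s where x: "x = (V, s)" by (cases x)
    from xT obtain lam where h: "(lam, V) \<in> Fset p" "s \<le> (\<Sum>n\<in>UNIV. lam$n) - c"
      unfolding T_def x by blast
    have "s \<le> dsup \<Q> V" using c[OF h(1)] h(2) by linarith
    then show ?thesis unfolding U_def x by simp
  qed
  then have disj: "T \<inter> U = {}" unfolding disjoint_iff by blast
  have Tne: "T \<noteq> {}" using T0 by blast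
  have "(0, 1) \<in> U" by (rule U0) simp
  then have Une: "U \<noteq> {}" by blast
  obtain a b where a: "a \<noteq> 0" and aT: "\<forall>x\<in>T. a \<bullet> x \<le> b" and aU: "\<forall>x\<in>U. a \<bullet> x \<ge> b"
    using separating_hyperplane_sets[OF cT cU Tne Une disj] by metis
  obtain W \<alpha> where aW: "a = (W, \<alpha>)" by (cases a)
  have aTW: "W \<bullet> V + \<alpha> * s \<le> b" if "(V, s) \<in> T" for V s using aT that aW by auto
  have aUW: "W \<bullet> V + \<alpha> * s \<ge> b" if "(V, s) \<in> U" for V s using aU that aW by auto
  have b0: "b \<le> 0"
  proof (rule ccontr)
    assume "\<not> b \<le> 0"
    then have bp: "b > 0" by simp
    show False
    proof (cases "\<alpha> > 0")
      case True
      have "b \<le> \<alpha> * (b / (2 * \<alpha>))" using aUW[OF U0[of "b / (2*\<alpha>)"]] bp True by simp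
      then show False using bp True by (simp add: field_simps)
    next
      case False
      have "b \<le> \<alpha> * 1" using aUW[OF U0[of 1]] by simp
      then show False using False bp by simp
    qed
  qed
  have al: "\<alpha> > 0"
  proof (rule ccontr)
    assume "\<not> \<alpha> > 0"
    then have an: "\<alpha> \<le> 0" by simp
    show False
    proof (cases "\<alpha> = 0")
      case True
      then have W: "W \<noteq> 0" using a aW by (auto simp: zero_prod_def)
      define k where "k = (\<bar>b\<bar> + 1) / (W \<bullet> W)"
      have WW: "W \<bullet> W > 0" using W by simp
      have "b \<le> W \<bullet> (- k *\<^sub>R W) + \<alpha> * (dsup \<Q> (- k *\<^sub>R W) + 1)"
        by (rule aUW[OF UV]) simp
      also have "\<dots> = - (\<bar>b\<bar> + 1)" unfolding k_def using True WW by simp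
      finally show False by simp
    next
      case False
      then have aneg: "\<alpha> < 0" using an by simp
      define t where "t = (\<bar>b\<bar> + 1) / (- \<alpha>)"
      have t: "t > 0" unfolding t_def by (rule divide_pos_pos) (use aneg in auto)
      have "b \<le> W \<bullet> 0 + \<alpha> * t" by (rule aUW[OF U0[OF t]])
      also have "\<dots> = - (\<bar>b\<bar> + 1)" unfolding t_def using aneg by simp
      finally show False by simp
    qed
  qed
  have keyU: "b \<le> W \<bullet> V + \<alpha> * dsup \<Q> V" for V
  proof (rule field_le_epsilon)
    fix e :: real assume e: "e > 0"
    have "b \<le> W \<bullet> V + \<alpha> * (dsup \<Q> V + e / \<alpha>)" by (rule aUW[OF UV]) (use e al in simp)
    then show "b \<le> W \<bullet> V + \<alpha> * dsup \<Q> V + e" using al by (simp add: distrib_left)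
  qed
  define Q0 where "Q0 = - (1 / \<alpha>) *\<^sub>R W"
  have WQ: "W = - \<alpha> *\<^sub>R Q0" unfolding Q0_def using al by simp
  have Q0in: "Q0 \<in> \<Q>"
  proof (rule ccontr)
    assume nin: "Q0 \<notin> \<Q>"
    obtain a' b' where a': "a' \<bullet> Q0 < b'" "\<forall>x\<in>\<Q>. a' \<bullet> x > b'"
      using separating_hyperplane_closed_point[OF cv compact_imp_closed[OF cp] nin] by blast
    define k where "k = (\<bar>b\<bar> + 1) / (\<alpha> * (b' - a' \<bullet> Q0))"
    have k: "k > 0" unfolding k_def using a'(1) al by simp
    have ds: "dsup \<Q> (- k *\<^sub>R a') \<le> - k * b'"
    proof (rule dsup_le[OF ne])
      fix x assume "x \<in> \<Q>"
      then have "a' \<bullet> x > b'" using a' by auto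
      then show "(- k *\<^sub>R a') \<bullet> x \<le> - k * b'" using k by simp
    qed
    have "b \<le> W \<bullet> (- k *\<^sub>R a') + \<alpha> * dsup \<Q> (- k *\<^sub>R a')" by (rule keyU)
    also have "\<dots> \<le> W \<bullet> (- k *\<^sub>R a') + \<alpha> * (- k * b')"
      using ds al by (intro add_left_mono mult_left_mono) auto
    also have "\<dots> = \<alpha> * k * (a' \<bullet> Q0 - b')" unfolding WQ by (simp add: algebra_simps inner_commute)
    also have "\<dots> = - (\<bar>b\<bar> + 1)" unfolding k_def using a'(1) al by (simp add: field_simps)
    finally show False by simp
  qed
  have "(\<Sum>n\<in>UNIV. lam$n) - V \<bullet> Q0 \<le> c" if F: "(lam, V) \<in> Fset p" for lam V
  proof -
    have "(V, (\<Sum>n\<in>UNIV. lam$n) - c) \<in> T" unfolding T_def using F by auto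
    then have "W \<bullet> V + \<alpha> * ((\<Sum>n\<in>UNIV. lam$n) - c) \<le> b" by (rule aTW)
    then have "\<alpha> * ((\<Sum>n\<in>UNIV. lam$n) - c - V \<bullet> Q0) \<le> 0" using b0 unfolding WQ
      by (simp add: algebra_simps inner_commute)
    then show ?thesis using al by (simp add: mult_le_0_iff)
  qed
  then show ?thesis using Q0in by blast
qed



theorem proposition2:
  fixes \<Q> :: "(real^'m^'n) set"
  assumes "\<Q> \<noteq> {}" and "compact \<Q>" and "convex \<Q>" and "\<Q> \<subseteq> stoch_matrices"
  shows "primal_value \<Q> = dual_value \<Q> \<and> robust_capacity \<Q> = dual_value \<Q>"
proof -
  note ne = assms(1) and cp = assms(2) and cv = assms(3) and sub = assms(4)
  have QS: "Q \<in> stoch_matrices" if "Q \<in> \<Q>" for Q using sub that by auto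
  have Dge0: "0 \<le> dual_value \<Q>" unfolding dual_value_def
  proof (rule INF_greatest, clarify)
    fix v Q assume "Q \<in> \<Q>"
    then show "0 \<le> ereal (dual_obj v Q)" using dual_nonneg[OF QS] by simp
  qed
  obtain Q1 where Q1: "Q1 \<in> \<Q>" using ne by auto
  have Dle: "dual_value \<Q> \<le> ereal (dual_obj v Q)" if "Q \<in> \<Q>" for v Q
    unfolding dual_value_def by (rule INF_lower2[of "(v, Q)"]) (use that in auto)
  define D0 where "D0 = real_of_ereal (dual_value \<Q>)"
  have DD: "dual_value \<Q> = ereal D0"
    unfolding D0_def using Dge0 Dle[OF Q1, of 0] by (cases "dual_value \<Q>") auto
  have D0le: "D0 \<le> dual_obj v Q" if "Q \<in> \<Q>" for v Q using Dle[OF that, of v] DD by simp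
  have RD: "robust_capacity \<Q> \<le> dual_value \<Q>"
    unfolding robust_capacity_def
  proof (rule SUP_least)
    fix p :: "real^'n" assume p: "p \<in> prob_simplex"
    show "(INF Q\<in>\<Q>. ereal (mutual_info p Q)) \<le> dual_value \<Q>"
      unfolding dual_value_def
    proof (rule INF_greatest, clarify)
      fix v Q assume Q: "Q \<in> \<Q>"
      have "(INF Q\<in>\<Q>. ereal (mutual_info p Q)) \<le> ereal (mutual_info p Q)" by (rule INF_lower[OF Q])
      also have "\<dots> \<le> ereal (dual_obj v Q)" using mi_le_dual[OF p QS[OF Q]] by simp
      finally show "(INF Q\<in>\<Q>. ereal (mutual_info p Q)) \<le> ereal (dual_obj v Q)" .
    qed
  qed
  have val: "ereal (\<Sum>n\<in>UNIV. lam$n) - support_fun V \<Q> = ereal ((\<Sum>n\<in>UNIV. lam$n) - dsup \<Q> V)" for lam :: "real^'n" and V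
    using support_eq[OF cp ne, of V] by simp
  have PR: "primal_value \<Q> \<le> robust_capacity \<Q>"
    unfolding primal_value_def
  proof (rule SUP_least, clarify)
    fix p lam :: "real^'n" and V :: "real^'m^'n" assume feas: "primal_feasible p lam V"
    then have p: "p \<in> prob_simplex" unfolding primal_feasible_def by simp
    have F: "(lam, V) \<in> Fset p" using feas_iff[OF p, of lam V] feas by blast
    have "ereal ((\<Sum>n\<in>UNIV. lam$n) - dsup \<Q> V) \<le> (INF Q\<in>\<Q>. ereal (mutual_info p Q))"
    proof (rule INF_greatest)
      fix Q assume Q: "Q \<in> \<Q>"
      have "(\<Sum>n\<in>UNIV. lam$n) - dsup \<Q> V \<le> (\<Sum>n\<in>UNIV. lam$n) - V \<bullet> Q" using dsup_ge[OF cp Q] by simp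
      also have "\<dots> \<le> mutual_info p Q" by (rule W1[OF p F QS[OF Q]])
      finally show "ereal ((\<Sum>n\<in>UNIV. lam$n) - dsup \<Q> V) \<le> ereal (mutual_info p Q)" by simp
    qed
    also have "\<dots> \<le> robust_capacity \<Q>" unfolding robust_capacity_def by (rule SUP_upper[OF p])
    finally show "ereal (\<Sum>n\<in>UNIV. lam$n) - support_fun V \<Q> \<le> robust_capacity \<Q>"
      using val by simp
  qed
  obtain p where p: "p \<in> prob_simplex" and pI: "\<forall>Q\<in>\<Q>. D0 \<le> mutual_info p Q"
    using S1[OF ne cv sub D0le] by blast
  have Pge: "ereal ((\<Sum>n\<in>UNIV. lam$n) - dsup \<Q> V) \<le> primal_value \<Q>" if F: "(lam, V) \<in> Fset p" for lam :: "real^'n" and V :: "real^'m^'n"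
  proof -
    have "primal_feasible p lam V" using feas_iff[OF p, of lam V] F by blast
    then have mem: "(p, lam, V) \<in> {(p, lam, V). primal_feasible p lam V}" by simp
    have "ereal (\<Sum>n\<in>UNIV. lam$n) - support_fun V \<Q> \<le> primal_value \<Q>"
      unfolding primal_value_def
      using SUP_upper[OF mem, of "\<lambda>(p, lam, V). ereal (\<Sum>n\<in>UNIV. lam$n) - support_fun V \<Q>"] by simp
    then show ?thesis using val by simp
  qed
  have P0: "0 \<le> primal_value \<Q>" using Pge[OF Fset_zero[OF p]] dsup_zero[OF ne] by (simp add: zero_ereal_def)
  define P0 where "P0 = real_of_ereal (primal_value \<Q>)"
  have PP: "primal_value \<Q> = ereal P0"
    unfolding P0_def using P0 PR RD DD by (cases "primal_value \<Q>") auto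
  have cP: "(\<Sum>n\<in>UNIV. lam$n) - dsup \<Q> V \<le> P0" if "(lam, V) \<in> Fset p" for lam :: "real^'n" and V :: "real^'m^'n"
    using Pge[OF that] PP by simp
  obtain Q0 where Q0: "Q0 \<in> \<Q>" and Q0c: "\<forall>lam V. (lam, V) \<in> Fset p \<longrightarrow> (\<Sum>n\<in>UNIV. lam$n) - V \<bullet> Q0 \<le> P0"
    using S2[OF ne cp cv cP p] by blast
  have "mutual_info p Q0 \<le> P0"
  proof (rule field_le_epsilon)
    fix e :: real assume e: "e > 0"
    define d where "d = e / real CARD('m)"
    have d: "d > 0" unfolding d_def using e by simp
    obtain lam V where F: "(lam, V) \<in> Fset p" and le: "mutual_info p Q0 - real CARD('m) * d \<le> (\<Sum>n\<in>UNIV. lam$n) - V \<bullet> Q0"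
      using approx2[OF p QS[OF Q0] d] by blast
    have "mutual_info p Q0 - e \<le> P0" using le Q0c F unfolding d_def by force
    then show "mutual_info p Q0 \<le> P0 + e" by simp
  qed
  then have "D0 \<le> P0" using pI Q0 by force
  then have DP: "dual_value \<Q> \<le> primal_value \<Q>" using DD PP by simp
  show ?thesis using DP PR RD by (meson order_antisym order_trans)
qed


end
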